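(* Let $\Omega = \mathbb{R}^{2n}$, or $\Omega = \mathbb{Z}_d^{2n}$ with $d$ prime. Let $\{(V,\vec v_j)\}_j$ be a family of epistemic states, with $V = \langle \vec f_1,\dots,\vec f_k\rangle$, such that $\vec f_k$ is totally unknown in the family and $\vec f_1,\dots,\vec f_{k-1}$ are constant. Then there exists an observable $\vec f\in\Omega$ such that $V' := \langle \vec f_1,\dots,\vec f_{k-1}\rangle \oplus \langle\vec f\rangle$ is an isotropic subspace with $V'\neq V$. Furthermore, $(V',\vec v_j)$ is a valid epistemic state for every valuation vector $\vec v_j$ of the family.
   Context: Phase space $\Omega$ (over $\mathbb R$ or $\mathbb Z_d$) with coordinates $(q_1,p_1,\dots,q_n,p_n)$. Observables are vectors $\vec f\in\Omega$, evaluated on an ontic state $\vec m$ as $\vec f^T\vec m$. Symplectic form: $\langle\vec f,\vec g\rangle = \sum_{i=1}^n (f_{2i-1}g_{2i} - f_{2i}g_{2i-1})$ (mod $d$ in the discrete case); observables commute if this vanishes. A subspace $V$ is isotropic if $\langle \vec f,\vec g\rangle=0$ for all $\vec f,\vec g\in V$. A (valid) epistemic state is a pair $(V,\vec v)$ with $V\subseteq\Omega$ isotropic and $\vec v\in\Omega$. For a family $\{(V,\vec v_j)\}_j$, an observable $\vec f_i\in V$ is constant if $\vec f_i^T\vec v_j$ is the same for all $j$, and totally unknown if for every possible value $c$ of $\vec f_i$ (every value attained by $\vec f_i^T\vec m$, $\vec m\in\Omega$) some member satisfies $\vec f_i^T\vec v_j = c$. *)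

theory Defs
  imports Main "Berlekamp_Zassenhaus.Finite_Field"
begin

text \<open>Phase space over a field: vectors are functions nat => 'a supported on
  the coordinate indices 0..2n-1; index 2i is q_(i+1), index 2i+1 is p_(i+1).\<close>

definition Omega :: "nat \<Rightarrow> (nat \<Rightarrow> 'a::field) set" where
  "Omega n = {x. \<forall>i\<ge>2*n. x i = 0}"

definition evalo :: "nat \<Rightarrow> (nat \<Rightarrow> 'a::field) \<Rightarrow> (nat \<Rightarrow> 'a) \<Rightarrow> 'a" where
  "evalo n f m = (\<Sum>i<2*n. f i * m i)"

definition symp :: "nat \<Rightarrow> (nat \<Rightarrow> 'a::field) \<Rightarrow> (nat \<Rightarrow> 'a) \<Rightarrow> 'a" where
  "symp n f g = (\<Sum>i<n. f (2*i) * g (2*i+1) - f (2*i+1) * g (2*i))"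

definition isotropic :: "nat \<Rightarrow> (nat \<Rightarrow> 'a::field) set \<Rightarrow> bool" where
  "isotropic n V \<longleftrightarrow> (\<forall>f\<in>V. \<forall>g\<in>V. symp n f g = 0)"

definition spanv :: "nat \<Rightarrow> (nat \<Rightarrow> nat \<Rightarrow> 'a::field) \<Rightarrow> (nat \<Rightarrow> 'a) set" where
  "spanv k fs = {x. \<exists>c. x = (\<lambda>t. \<Sum>i<k. c i * fs i t)}"

definition lin_indep :: "nat \<Rightarrow> (nat \<Rightarrow> nat \<Rightarrow> 'a::field) \<Rightarrow> bool" where
  "lin_indep k fs \<longleftrightarrow>
     (\<forall>c. (\<forall>t. (\<Sum>i<k. c i * fs i t) = 0) \<longrightarrow> (\<forall>i<k. c i = 0))"

definition epistemic_state :: "nat \<Rightarrow> (nat \<Rightarrow> 'a::field) set \<Rightarrow> (nat \<Rightarrow> 'a) \<Rightarrow> bool" where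
  "epistemic_state n V v \<longleftrightarrow>
     V \<subseteq> Omega n \<and> (\<lambda>t. 0) \<in> V \<and> (\<forall>x\<in>V. \<forall>y\<in>V. \<forall>a. (\<lambda>t. x t + y t) \<in> V \<and> (\<lambda>t. a * x t) \<in> V)
     \<and> isotropic n V \<and> v \<in> Omega n"

definition constant_obs :: "nat \<Rightarrow> (nat \<Rightarrow> 'a::field) \<Rightarrow> 'j set \<Rightarrow> ('j \<Rightarrow> nat \<Rightarrow> 'a) \<Rightarrow> bool" where
  "constant_obs n f J v \<longleftrightarrow> (\<forall>j\<in>J. \<forall>j'\<in>J. evalo n f (v j) = evalo n f (v j'))"

definition totally_unknown :: "nat \<Rightarrow> (nat \<Rightarrow> 'a::field) \<Rightarrow> 'j set \<Rightarrow> ('j \<Rightarrow> nat \<Rightarrow> 'a) \<Rightarrow> bool" where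
  "totally_unknown n f J v \<longleftrightarrow>
     (\<forall>c \<in> {evalo n f m | m. m \<in> Omega n}. \<exists>j\<in>J. evalo n f (v j) = c)"

definition theorem5_claim :: "nat \<Rightarrow> nat \<Rightarrow> (nat \<Rightarrow> nat \<Rightarrow> 'a::field) \<Rightarrow> 'j set \<Rightarrow> ('j \<Rightarrow> nat \<Rightarrow> 'a) \<Rightarrow> bool" where
  "theorem5_claim n k fs J v \<longleftrightarrow>
    ((k \<ge> 1 \<and> (\<forall>i<k. fs i \<in> Omega n) \<and> lin_indep k fs
      \<and> (\<forall>j\<in>J. epistemic_state n (spanv k fs) (v j))
      \<and> totally_unknown n (fs (k-1)) J v
      \<and> (\<forall>i<k-1. constant_obs n (fs i) J v))
     \<longrightarrow>
     (\<exists>f \<in> Omega n.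
        f \<notin> spanv (k-1) fs
        \<and> isotropic n (spanv k (fs((k-1) := f)))
        \<and> spanv k (fs((k-1) := f)) \<noteq> spanv k fs
        \<and> (\<forall>j\<in>J. epistemic_state n (spanv k (fs((k-1) := f))) (v j))))"

end

theory Submission
  imports Defs
begin

definition ipr :: "nat \<Rightarrow> (nat \<Rightarrow> 'a::field) \<Rightarrow> (nat \<Rightarrow> 'a) \<Rightarrow> 'a" where
  "ipr N h g = (\<Sum>t<N. h t * g t)"

lemma ipr_lin2: "ipr N h (\<lambda>t. \<Sum>j<k. c j * G j t) = (\<Sum>j<k. c j * ipr N h (G j))"
  unfolding ipr_def
  by (simp add: sum_distrib_left mult.left_commute sum.swap[of _ "{..<N}"])

lemma ipr_diff: "ipr N h (\<lambda>t. a t - b t) = ipr N h a - ipr N h b"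
  unfolding ipr_def by (simp add: right_diff_distrib sum_subtractf)

lemma ipr_scal: "ipr N h (\<lambda>t. c * a t) = c * ipr N h a"
  unfolding ipr_def by (simp add: sum_distrib_left mult.left_commute)

lemma ipr_div: "ipr N h (\<lambda>t. a t / c) = ipr N h a / c"
  unfolding ipr_def by (simp add: sum_divide_distrib)

lemma ipr_delta: "t0 < N \<Longrightarrow> ipr N h (\<lambda>t. if t = t0 then 1 else 0) = h t0"
  unfolding ipr_def by (simp add: if_distrib cong: if_cong)

lemma dual_exists:
  fixes h :: "nat \<Rightarrow> nat \<Rightarrow> 'a::field"
  assumes "\<forall>c. (\<forall>t<N. (\<Sum>i<k. c i * h i t) = 0) \<longrightarrow> (\<forall>i<k. c i = 0)"
  shows "\<forall>i<k. \<exists>g. (\<forall>t\<ge>N. g t = 0) \<and> (\<forall>j<k. ipr N (h j) g = (if j = i then 1 else 0))"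
  using assms
proof (induction k)
  case 0
  then show ?case by simp
next
  case (Suc k)
  have indk: "\<forall>c. (\<forall>t<N. (\<Sum>i<k. c i * h i t) = 0) \<longrightarrow> (\<forall>i<k. c i = 0)"
  proof (rule allI, rule impI)
    fix c assume c0: "\<forall>t<N. (\<Sum>i<k. c i * h i t) = 0"
    let ?c = "c(k := 0)"
    have "\<forall>t<N. (\<Sum>i<Suc k. ?c i * h i t) = 0"
      using c0 by (simp add: sum.cong[OF refl, of "{..<k}" "\<lambda>i. ?c i * h i _" "\<lambda>i. c i * h i _"])
    hence a: "\<forall>i<Suc k. ?c i = 0" using Suc.prems by blast
    show "\<forall>i<k. c i = 0"
    proof (intro allI impI)
      fix i assume "i < k"
      hence "i < Suc k" by simp
      hence "?c i = 0" using a by blast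
      thus "c i = 0" using \<open>i < k\<close> by simp
    qed
  qed
  from Suc.IH[OF indk] obtain G where G: "\<forall>i<k. (\<forall>t\<ge>N. G i t = 0) \<and> (\<forall>j<k. ipr N (h j) (G i) = (if j = i then 1 else 0))"
    by metis
  define u where "u t = h k t - (\<Sum>j<k. ipr N (h k) (G j) * h j t)" for t
  have "\<exists>t0<N. u t0 \<noteq> 0"
  proof (rule ccontr)
    assume "\<not> ?thesis"
    hence u0: "\<forall>t<N. u t = 0" by auto
    define c where "c i = (if i < k then - ipr N (h k) (G i) else 1)" for i
    have "\<forall>t<N. (\<Sum>i<Suc k. c i * h i t) = 0"
    proof (intro allI impI)
      fix t assume "t < N"
      have "(\<Sum>i<Suc k. c i * h i t) = (\<Sum>i<k. - ipr N (h k) (G i) * h i t) + h k t"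
        by (simp add: c_def)
      also have "\<dots> = u t" by (simp add: u_def sum_negf)
      finally show "(\<Sum>i<Suc k. c i * h i t) = 0" using u0 \<open>t < N\<close> by simp
    qed
    hence "c k = 0" using Suc.prems by blast
    thus False by (simp add: c_def)
  qed
  then obtain t0 where t0: "t0 < N" "u t0 \<noteq> 0" by blast
  define x where "x t = (if t = t0 then (1::'a) else 0)" for t
  define g where "g t = (x t - (\<Sum>j<k. h j t0 * G j t)) / u t0" for t
  have gsupp: "\<forall>t\<ge>N. g t = 0" using G t0 by (simp add: g_def x_def)
  have gk: "\<forall>i<k. ipr N (h i) g = 0"
  proof (intro allI impI)
    fix i assume "i < k"
    have "ipr N (h i) g = (ipr N (h i) x - (\<Sum>j<k. h j t0 * ipr N (h i) (G j))) / u t0"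
      unfolding g_def by (simp add: ipr_div ipr_diff ipr_lin2)
    also have "(\<Sum>j<k. h j t0 * ipr N (h i) (G j)) = (\<Sum>j<k. if j = i then h j t0 else 0)"
      using G \<open>i < k\<close> by (intro sum.cong) auto
    also have "\<dots> = h i t0" using \<open>i < k\<close> by simp
    also have "ipr N (h i) x = h i t0" unfolding x_def by (rule ipr_delta[OF t0(1)])
    finally show "ipr N (h i) g = 0" by simp
  qed
  have gkk: "ipr N (h k) g = 1"
  proof -
    have "ipr N (h k) g = (ipr N (h k) x - (\<Sum>j<k. h j t0 * ipr N (h k) (G j))) / u t0"
      unfolding g_def by (simp add: ipr_div ipr_diff ipr_lin2)
    also have "ipr N (h k) x = h k t0" unfolding x_def by (rule ipr_delta[OF t0(1)])
    also have "h k t0 - (\<Sum>j<k. h j t0 * ipr N (h k) (G j)) = u t0"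
      by (simp add: u_def mult.commute)
    finally show ?thesis using t0(2) by simp
  qed
  show ?case
  proof (intro allI impI)
    fix i assume i: "i < Suc k"
    show "\<exists>g. (\<forall>t\<ge>N. g t = 0) \<and> (\<forall>j<Suc k. ipr N (h j) g = (if j = i then 1 else 0))"
    proof (cases "i = k")
      case True
      then show ?thesis using gsupp gk gkk by (intro exI[of _ g]) (auto simp: less_Suc_eq)
    next
      case False
      hence ik: "i < k" using i by simp
      define g' where "g' t = G i t - ipr N (h k) (G i) * g t" for t
      have "ipr N (h j) g' = ipr N (h j) (G i) - ipr N (h k) (G i) * ipr N (h j) g" for j
        unfolding g'_def by (simp only: ipr_diff ipr_scal)
      moreover have "\<forall>t\<ge>N. g' t = 0" using G gsupp ik by (simp add: g'_def)
      ultimately show ?thesis using G gk gkk ik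
        by (intro exI[of _ g']) (auto simp: less_Suc_eq)
    qed
  qed
qed

definition Jm :: "(nat \<Rightarrow> 'a::field) \<Rightarrow> nat \<Rightarrow> 'a" where
  "Jm x t = (if even t then - x (t+1) else x (t-1))"

lemma sum_pairs:
  fixes F :: "nat \<Rightarrow> 'b::comm_monoid_add" and n :: nat
  shows "(\<Sum>t<2*n. F t) = (\<Sum>i<n. F (2*i) + F (2*i+1))"
  by (induction n) (auto simp: add_ac)

lemma symp_ipr: "symp n x y = ipr (2*n) (Jm x) y"
  unfolding symp_def ipr_def sum_pairs
  by (intro sum.cong) (simp_all add: Jm_def algebra_simps)

lemma symp_lin2: "symp n x (\<lambda>t. \<Sum>j<m. b j * G j t) = (\<Sum>j<m. b j * symp n x (G j))"
  by (simp add: symp_ipr ipr_lin2)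

lemma symp_anti: "symp n x y = - symp n y x"
  unfolding symp_def by (simp add: sum_negf[symmetric] algebra_simps)

lemma symp_self: "symp n x x = 0"
  unfolding symp_def by (simp add: mult.commute)

lemma symp_lin1: "symp n (\<lambda>t. \<Sum>j<m. b j * G j t) y = (\<Sum>j<m. b j * symp n (G j) y)"
  by (subst symp_anti) (simp add: symp_lin2 sum_negf[symmetric] symp_anti[of n y])

lemma spanv_mem: "i < k \<Longrightarrow> F i \<in> spanv k F"
proof -
  assume i: "i < k"
  have "(\<Sum>l<k. (if l = i then 1 else 0) * F l t) = F i t" for t
  proof -
    have "(\<Sum>l<k. (if l = i then 1 else 0) * F l t) = (\<Sum>l<k. if l = i then F l t else 0)"
      by (intro sum.cong) auto
    also have "\<dots> = F i t" using i by simp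
    finally show ?thesis .
  qed
  then show ?thesis unfolding spanv_def
    by (intro CollectI exI[of _ "\<lambda>l. if l = i then 1 else 0"]) auto
qed

lemma spanv_mono: "m \<le> k \<Longrightarrow> spanv m F \<subseteq> spanv k F"
proof
  fix x assume "m \<le> k" "x \<in> spanv m F"
  then obtain c where c: "x = (\<lambda>t. \<Sum>i<m. c i * F i t)" unfolding spanv_def by blast
  have "(\<Sum>i<k. (if i < m then c i else 0) * F i t) = (\<Sum>i<m. c i * F i t)" for t
  proof -
    have "(\<Sum>i<k. (if i < m then c i else 0) * F i t) = (\<Sum>i<k. if i < m then c i * F i t else 0)"
      by (intro sum.cong) auto
    also have "\<dots> = (\<Sum>i\<in>{i\<in>{..<k}. i < m}. c i * F i t)" by (rule sum.inter_filter[symmetric]) simp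
    also have "{i\<in>{..<k}. i < m} = {..<m}" using \<open>m \<le> k\<close> by auto
    finally show ?thesis .
  qed
  then show "x \<in> spanv k F" unfolding spanv_def c by (intro CollectI exI[of _ "\<lambda>i. if i < m then c i else 0"]) simp
qed

lemma spanv_add: "x \<in> spanv k F \<Longrightarrow> y \<in> spanv k F \<Longrightarrow> (\<lambda>t. x t + y t) \<in> spanv k F"
proof -
  assume "x \<in> spanv k F" "y \<in> spanv k F"
  then obtain c d where "x = (\<lambda>t. \<Sum>i<k. c i * F i t)" "y = (\<lambda>t. \<Sum>i<k. d i * F i t)"
    unfolding spanv_def by blast
  then show ?thesis unfolding spanv_def
    by (intro CollectI exI[of _ "\<lambda>i. c i + d i"]) (simp add: sum.distrib distrib_right)
qed

lemma spanv_scal: "x \<in> spanv k F \<Longrightarrow> (\<lambda>t. a * x t) \<in> spanv k F"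
proof -
  assume "x \<in> spanv k F"
  then obtain c where "x = (\<lambda>t. \<Sum>i<k. c i * F i t)"
    unfolding spanv_def by blast
  then show ?thesis unfolding spanv_def
    by (intro CollectI exI[of _ "\<lambda>i. a * c i"]) (simp add: sum_distrib_left mult.assoc)
qed

lemma spanv_zero: "(\<lambda>t. 0) \<in> spanv k F"
  unfolding spanv_def by (intro CollectI exI[of _ "\<lambda>i. 0"]) simp

lemma spanv_Omega: "\<forall>i<k. F i \<in> Omega n \<Longrightarrow> spanv k F \<subseteq> Omega n"
  unfolding spanv_def Omega_def by auto

lemma spanv_iso: "(\<forall>i<k. \<forall>j<k. symp n (F i) (F j) = 0) \<Longrightarrow> isotropic n (spanv k F)"
  unfolding isotropic_def spanv_def
  by (auto simp: symp_lin1 symp_lin2)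

lemma claim_field: "theorem5_claim n k (fs :: nat \<Rightarrow> nat \<Rightarrow> 'a::field) J v"
  unfolding theorem5_claim_def
proof (intro impI)
  assume H: "1 \<le> k \<and> (\<forall>i<k. fs i \<in> Omega n) \<and> lin_indep k fs \<and>
    (\<forall>j\<in>J. epistemic_state n (spanv k fs) (v j)) \<and>
    totally_unknown n (fs (k - 1)) J v \<and> (\<forall>i<k - 1. constant_obs n (fs i) J v)"
  have k1: "1 \<le> k" and fsO: "\<forall>i<k. fs i \<in> Omega n" and li: "lin_indep k fs"
    and es: "\<forall>j\<in>J. epistemic_state n (spanv k fs) (v j)" and tu: "totally_unknown n (fs (k - 1)) J v"
    using H by auto
  have "(\<lambda>_. 0) \<in> Omega n" by (simp add: Omega_def)
  then obtain j0 where "j0 \<in> J" using tu unfolding totally_unknown_def by blast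
  then have isoV: "isotropic n (spanv k fs)" using es by (simp add: epistemic_state_def)
  have iso: "symp n (fs i) (fs j) = 0" if "i < k" "j < k" for i j
    using isoV spanv_mem[OF that(1)] spanv_mem[OF that(2)] unfolding isotropic_def by blast
  have liJ: "\<forall>c. (\<forall>t<2*n. (\<Sum>i<k. c i * Jm (fs i) t) = 0) \<longrightarrow> (\<forall>i<k. c i = 0)"
  proof (rule allI, rule impI)
    fix c assume c0: "\<forall>t<2*n. (\<Sum>i<k. c i * Jm (fs i) t) = 0"
    have "\<forall>t. (\<Sum>i<k. c i * fs i t) = 0"
    proof
      fix t
      show "(\<Sum>i<k. c i * fs i t) = 0"
      proof (cases "t < 2*n")
        case False
        then show ?thesis using fsO by (simp add: Omega_def)
      next
        case True
        show ?thesis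
        proof (cases "even t")
          case True
          hence "t + 1 < 2*n" "odd (t+1)" using \<open>t < 2*n\<close> by presburger+
          then show ?thesis using c0[rule_format, of "t+1"] by (simp add: Jm_def)
        next
          case False
          hence "t - 1 < 2*n" "even (t-1)" "t - 1 + 1 = t" using \<open>t < 2*n\<close> by presburger+
          hence "(\<Sum>i<k. c i * - fs i t) = 0" using c0 by (auto simp: Jm_def)
          then show ?thesis by (simp add: sum_negf)
        qed
      qed
    qed
    then show "\<forall>i<k. c i = 0" using li unfolding lin_indep_def by blast
  qed
  have kk: "k - 1 < k" using k1 by simp
  obtain f where fsupp: "\<forall>t\<ge>2*n. f t = 0"
    and fd: "\<forall>j<k. ipr (2*n) (Jm (fs j)) f = (if j = k - 1 then 1 else 0)"
    using dual_exists[OF liJ, rule_format, OF kk] by blast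
  have sf: "symp n (fs j) f = (if j = k - 1 then 1 else 0)" if "j < k" for j
    using fd that by (simp add: symp_ipr)
  have fO: "f \<in> Omega n" using fsupp by (simp add: Omega_def)
  have fV: "f \<notin> spanv k fs"
  proof
    assume "f \<in> spanv k fs"
    then have "symp n (fs (k-1)) f = 0" using isoV spanv_mem[of "k-1" k fs] k1
      unfolding isotropic_def by auto
    then show False using sf[of "k-1"] k1 by simp
  qed
  define F' where "F' = fs((k-1) := f)"
  have F'O: "\<forall>i<k. F' i \<in> Omega n" using fsO fO by (simp add: F'_def)
  have F'iso: "\<forall>i<k. \<forall>j<k. symp n (F' i) (F' j) = 0"
  proof (intro allI impI)
    fix i j assume ij: "i < k" "j < k"
    show "symp n (F' i) (F' j) = 0"
    proof (cases "i = k - 1")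
      case True
      then show ?thesis using ij sf[of j] symp_self[of n f] symp_anti[of n f "fs j"]
        by (cases "j = k - 1") (simp_all add: F'_def)
    next
      case False
      then show ?thesis using ij sf[of i] iso[of i j]
        by (cases "j = k - 1") (simp_all add: F'_def)
    qed
  qed
  have isoF: "isotropic n (spanv k F')" using spanv_iso[OF F'iso] .
  have fF: "f \<in> spanv k F'" using spanv_mem[of "k-1" k F'] k1 by (simp add: F'_def)
  show "\<exists>f\<in>Omega n. f \<notin> spanv (k - 1) fs \<and> isotropic n (spanv k (fs(k - 1 := f))) \<and>
        spanv k (fs(k - 1 := f)) \<noteq> spanv k fs \<and>
        (\<forall>j\<in>J. epistemic_state n (spanv k (fs(k - 1 := f))) (v j))"
  proof (intro bexI[OF _ fO] conjI ballI)
    show "f \<notin> spanv (k - 1) fs" using fV spanv_mono[of "k-1" k fs] by auto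
    show "isotropic n (spanv k (fs(k - 1 := f)))" using isoF by (simp add: F'_def)
    show "spanv k (fs(k - 1 := f)) \<noteq> spanv k fs" using fF fV by (auto simp: F'_def)
    fix j assume "j \<in> J"
    then have "v j \<in> Omega n" using es by (simp add: epistemic_state_def)
    moreover have "\<forall>x\<in>spanv k F'. \<forall>y\<in>spanv k F'. \<forall>a. (\<lambda>t. x t + y t) \<in> spanv k F' \<and> (\<lambda>t. a * x t) \<in> spanv k F'"
      using spanv_add spanv_scal by blast
    ultimately have "epistemic_state n (spanv k F') (v j)"
      using isoF spanv_Omega[OF F'O] spanv_zero unfolding epistemic_state_def by blast
    then show "epistemic_state n (spanv k (fs(k - 1 := f))) (v j)" by (simp add: F'_def)
  qed
qed

theorem mainTheorem5:
  shows "(\<forall>(n::nat) (k::nat) (fs :: nat \<Rightarrow> nat \<Rightarrow> real) (J :: 'j set) v.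
            theorem5_claim n k fs J v)
       \<and> (\<forall>(n::nat) (k::nat) (fs :: nat \<Rightarrow> nat \<Rightarrow> 'p::prime_card mod_ring) (J :: 'j set) v.
            theorem5_claim n k fs J v)"
  by (simp add: claim_field)

end
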